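(* Let $S\subseteq M_n$ be a noncommutative graph. Then $\mathcal{H}(S)=1$ if and only if $S=M_n$.
   Context: All scalars are complex; $M_n$ denotes complex $n\times n$ matrices. A noncommutative graph is a linear subspace $S\subseteq M_n$ that contains $I_n$ and is closed under conjugate transpose. For a subspace $S\subseteq M_n$, $M_m(S)$ denotes the set of $m\times m$ block matrices $B=[B_{i,j}]_{i,j\in[m]}$ with every block $B_{i,j}\in S$, viewed as elements of $M_{mn}$. The Haemers bound is $\mathcal{H}(S)=\min\{\mathrm{rk}(B):\ m\in\mathbb{N},\ B\in M_m(S),\ \sum_{i=1}^m B_{i,i}=I_n\}$. *)

theory Defs
  imports "Jordan_Normal_Form.DL_Rank_Submatrix"
begin

definition ctrans :: "complex mat \<Rightarrow> complex mat" where
  "ctrans A = mat (dim_col A) (dim_row A) (\<lambda>(i, j). cnj (A $$ (j, i)))"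

definition nc_graph :: "nat \<Rightarrow> complex mat set \<Rightarrow> bool" where
  "nc_graph n S \<longleftrightarrow>
     S \<subseteq> carrier_mat n n \<and>
     0\<^sub>m n n \<in> S \<and>
     (\<forall>A\<in>S. \<forall>B\<in>S. A + B \<in> S) \<and>
     (\<forall>c::complex. \<forall>A\<in>S. c \<cdot>\<^sub>m A \<in> S) \<and>
     1\<^sub>m n \<in> S \<and>
     (\<forall>A\<in>S. ctrans A \<in> S)"

definition block :: "nat \<Rightarrow> complex mat \<Rightarrow> nat \<Rightarrow> nat \<Rightarrow> complex mat" where
  "block n B i j = mat n n (\<lambda>(a, b). B $$ (i * n + a, j * n + b))"

definition diag_block_sum :: "nat \<Rightarrow> nat \<Rightarrow> complex mat \<Rightarrow> complex mat" where
  "diag_block_sum n m B = mat n n (\<lambda>(a, b). \<Sum>i<m. block n B i i $$ (a, b))"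

definition in_block_space :: "nat \<Rightarrow> nat \<Rightarrow> complex mat set \<Rightarrow> complex mat \<Rightarrow> bool" where
  "in_block_space n m S B \<longleftrightarrow>
     B \<in> carrier_mat (m * n) (m * n) \<and> (\<forall>i<m. \<forall>j<m. block n B i j \<in> S)"

definition crank :: "complex mat \<Rightarrow> nat" where
  "crank B = vec_space.rank (dim_row B) B"

definition haemers :: "nat \<Rightarrow> complex mat set \<Rightarrow> nat" where
  "haemers n S = (LEAST r. \<exists>m B. m \<ge> 1 \<and> in_block_space n m S B \<and>
                                 diag_block_sum n m B = 1\<^sub>m n \<and> crank B = r)"

end

theory Submission
  imports Defs
begin
lemma det0: "A \<in> carrier_mat 0 0 \<Longrightarrow> det (A::'a::comm_ring_1 mat) = 1"
  by (simp add: det_def)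
lemma det1: assumes "A \<in> carrier_mat 1 1" shows "det (A::'a::comm_ring_1 mat) = A $$ (0,0)"
proof -
  have "det A = (\<Sum>i<1. A $$ (i,0) * cofactor A i 0)" using laplace_expansion_column[OF assms] by simp
  also have "\<dots> = A $$ (0,0)" using assms by (simp add: cofactor_def det0 mat_delete_def)
  finally show ?thesis .
qed
lemma det2: assumes A: "A \<in> carrier_mat 2 2" shows "det (A::'a::comm_ring_1 mat) = A $$ (0,0) * A $$ (1,1) - A $$ (0,1) * A $$ (1,0)"
proof -
  have "det A = (\<Sum>i<2. A $$ (i,0) * cofactor A i 0)" using laplace_expansion_column[OF assms] by simp
  also have "\<dots> = A $$ (0,0) * cofactor A 0 0 + A $$ (1,0) * cofactor A 1 0"
    by (simp add: numeral_2_eq_2)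
  also have "cofactor A 0 0 = A $$ (1,1)"
  proof -
    have c: "mat_delete A 0 0 \<in> carrier_mat 1 1" using mat_delete_carrier[OF A] by simp
    have "mat_delete A 0 0 $$ (0,0) = A $$ (1,1)" using A by (simp add: mat_delete_def)
    thus ?thesis unfolding cofactor_def using det1[OF c] by simp
  qed
  also have "cofactor A 1 0 = - A $$ (0,1)"
  proof -
    have c: "mat_delete A 1 0 \<in> carrier_mat 1 1" using mat_delete_carrier[OF A] by simp
    have "mat_delete A 1 0 $$ (0,0) = A $$ (0,1)" using A by (simp add: mat_delete_def)
    thus ?thesis unfolding cofactor_def using det1[OF c] by simp
  qed
  finally show ?thesis by (simp add: algebra_simps)
qed

lemma rank_ge1:
  fixes A :: "'a::field mat"
  assumes A: "A \<in> carrier_mat N M" and hr: "r < N" and hc: "c < M" and nz: "A $$ (r,c) \<noteq> 0"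
  shows "1 \<le> vec_space.rank N A"
proof -
  have dr: "dim_row A = N" and dc: "dim_col A = M" using A by auto
  have cr: "{i. i < dim_row A \<and> i \<in> {r}} = {r}" unfolding dr using hr by force
  have cc: "{j. j < dim_col A \<and> j \<in> {c}} = {c}" unfolding dc using hc by force
  have sc: "submatrix A {r} {c} \<in> carrier_mat 1 1"
  proof (rule carrier_matI)
    show "dim_row (submatrix A {r} {c}) = 1" unfolding dim_submatrix cr by simp
    show "dim_col (submatrix A {r} {c}) = 1" unfolding dim_submatrix cc by simp
  qed
  have e: "{a\<in>{r}. a < r} = {}" "{a\<in>{c}. a < c} = {}" by blast+
  have "submatrix A {r} {c} $$ (0,0) = A $$ (r,c)"
    using submatrix_index_card[of r A c "{r}" "{c}", unfolded e] A hr hc by simp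
  hence "det (submatrix A {r} {c}) \<noteq> 0" using det1[OF sc] nz by simp
  hence "card {j. j < M \<and> j \<in> {c}} \<le> vec_space.rank N A" by (rule vec_space.rank_gt_minor[OF A])
  thus ?thesis unfolding cc[unfolded dc] by simp
qed

lemma rank_minor2:
  fixes A :: "'a::field mat"
  assumes A: "A \<in> carrier_mat N M" and hr: "r < r'" "r' < N" and hc: "c < c'" "c' < M"
    and rk: "vec_space.rank N A \<le> 1"
  shows "A $$ (r,c) * A $$ (r',c') = A $$ (r,c') * A $$ (r',c)"
proof (rule ccontr)
  assume ne: "\<not> ?thesis"
  have dr: "dim_row A = N" and dc: "dim_col A = M" using A by auto
  have cr: "{i. i < dim_row A \<and> i \<in> {r,r'}} = {r,r'}" unfolding dr using hr by force
  have cc: "{j. j < dim_col A \<and> j \<in> {c,c'}} = {c,c'}" unfolding dc using hc by force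
  have sc: "submatrix A {r,r'} {c,c'} \<in> carrier_mat 2 2"
  proof (rule carrier_matI)
    show "dim_row (submatrix A {r,r'} {c,c'}) = 2" unfolding dim_submatrix cr using hr by simp
    show "dim_col (submatrix A {r,r'} {c,c'}) = 2" unfolding dim_submatrix cc using hc by simp
  qed
  have k1: "{a\<in>{r,r'}. a < r} = {}" "{a\<in>{c,c'}. a < c} = {}" using hr hc by force+
  have s1: "{a\<in>{r,r'}. a < r'} = {r}" "{a\<in>{c,c'}. a < c'} = {c}" using hr hc by force+
  have e00: "submatrix A {r,r'} {c,c'} $$ (0,0) = A $$ (r,c)"
    using submatrix_index_card[of r A c "{r,r'}" "{c,c'}", unfolded k1] A hr hc by simp
  have e01: "submatrix A {r,r'} {c,c'} $$ (0,1) = A $$ (r,c')"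
    using submatrix_index_card[of r A c' "{r,r'}" "{c,c'}", unfolded k1 s1] A hr hc by simp
  have e10: "submatrix A {r,r'} {c,c'} $$ (1,0) = A $$ (r',c)"
    using submatrix_index_card[of r' A c "{r,r'}" "{c,c'}", unfolded k1 s1] A hr hc by simp
  have e11: "submatrix A {r,r'} {c,c'} $$ (1,1) = A $$ (r',c')"
    using submatrix_index_card[of r' A c' "{r,r'}" "{c,c'}", unfolded k1 s1] A hr hc by simp
  have "det (submatrix A {r,r'} {c,c'}) \<noteq> 0" using det2[OF sc] e00 e01 e10 e11 ne by simp
  from vec_space.rank_gt_minor[OF A this] have "card {j. j < M \<and> j \<in> {c,c'}} \<le> vec_space.rank N A" .
  moreover have "{j. j < M \<and> j \<in> {c,c'}} = {c,c'}" using hc by force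
  ultimately show False using rk hc by simp
qed

lemma rank_minor2_all:
  fixes A :: "'a::field mat"
  assumes A: "A \<in> carrier_mat N M" and hr: "r < N" "r' < N" and hc: "c < M" "c' < M"
    and rk: "vec_space.rank N A \<le> 1"
  shows "A $$ (r,c) * A $$ (r',c') = A $$ (r,c') * A $$ (r',c)"
proof -
  consider "r = r'" | "c = c'" | "r < r'" "c < c'" | "r < r'" "c' < c" | "r' < r" "c < c'" | "r' < r" "c' < c"
    by (metis linorder_neqE_nat)
  then show ?thesis
  proof cases
    case 1 then show ?thesis by (metis mult.commute)
  next
    case 2 then show ?thesis by (metis mult.commute)
  next
    case 3 show ?thesis by (rule rank_minor2[OF A 3(1) hr(2) 3(2) hc(2) rk])
  next
    case 4
    have "A $$ (r,c') * A $$ (r',c) = A $$ (r,c) * A $$ (r',c')"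
      by (rule rank_minor2[OF A 4(1) hr(2) 4(2) hc(1) rk])
    then show ?thesis by (rule sym)
  next
    case 5
    have "A $$ (r',c) * A $$ (r,c') = A $$ (r',c') * A $$ (r,c)"
      by (rule rank_minor2[OF A 5(1) hr(1) 5(2) hc(2) rk])
    then show ?thesis by (metis mult.commute)
  next
    case 6
    have "A $$ (r',c') * A $$ (r,c) = A $$ (r',c) * A $$ (r,c')"
      by (rule rank_minor2[OF A 6(1) hr(1) 6(2) hc(1) rk])
    then show ?thesis by (metis mult.commute)
  qed
qed

lemma rank1_factor:
  fixes A :: "'a::field mat"
  assumes A: "A \<in> carrier_mat N M" and rk: "vec_space.rank N A = 1"
  shows "\<exists>f g. \<forall>r<N. \<forall>c<M. A $$ (r,c) = f r * g c"
proof -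
  have "\<exists>r0 c0. r0 < N \<and> c0 < M \<and> A $$ (r0,c0) \<noteq> 0"
  proof (rule ccontr)
    assume "\<not> ?thesis"
    hence "A = 0\<^sub>m N M" using A by (intro eq_matI) auto
    moreover have "vec_space.rank N (0\<^sub>m N M :: 'a mat) = 0" by (rule vec_space.rank_0I)
    ultimately show False using rk by simp
  qed
  then obtain r0 c0 where r0: "r0 < N" and c0: "c0 < M" and nz: "A $$ (r0,c0) \<noteq> 0" by blast
  show ?thesis
  proof (intro exI allI impI)
    fix r c assume hr: "r < N" and hc: "c < M"
    have "A $$ (r,c) * A $$ (r0,c0) = A $$ (r,c0) * A $$ (r0,c)"
      using rank_minor2_all[OF A hr r0 hc c0] rk by simp
    thus "A $$ (r,c) = A $$ (r,c0) * (A $$ (r0,c) / A $$ (r0,c0))"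
      using nz by (simp add: field_simps)
  qed
qed

lemma S_sum:
  assumes G: "nc_graph n S" and fin: "finite I" and F: "\<And>x. x \<in> I \<Longrightarrow> F x \<in> S"
  shows "mat n n (\<lambda>(p,q). \<Sum>x\<in>I. F x $$ (p,q)) \<in> S"
  using fin F
proof (induction I rule: finite_induct)
  case empty
  have e: "mat n n (\<lambda>(p,q). \<Sum>x\<in>{}. F x $$ (p,q)) = 0\<^sub>m n n" by (intro eq_matI) auto
  show ?case unfolding e using G unfolding nc_graph_def by blast
next
  case (insert x I)
  have Fx: "F x \<in> S" using insert by simp
  hence Fxc: "F x \<in> carrier_mat n n" using G unfolding nc_graph_def by blast
  have IH: "mat n n (\<lambda>(p,q). \<Sum>x\<in>I. F x $$ (p,q)) \<in> S"
    by (rule insert.IH) (use insert.prems in auto)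
  have "mat n n (\<lambda>(p,q). \<Sum>x\<in>insert x I. F x $$ (p,q)) = F x + mat n n (\<lambda>(p,q). \<Sum>x\<in>I. F x $$ (p,q))"
    using Fxc insert(1,2) by (intro eq_matI) auto
  thus ?case using G Fx IH unfolding nc_graph_def by metis
qed

lemma idx_lt: assumes "i < m" "a < (n::nat)" shows "i * n + a < m * n"
proof -
  have "i * n + a < (i+1) * n" using assms by simp
  also have "\<dots> \<le> m * n" using assms by (intro mult_le_mono1) simp
  finally show ?thesis .
qed

lemma swap4:
  "(\<Sum>i\<in>I. \<Sum>j\<in>J. \<Sum>a\<in>K. \<Sum>b\<in>L. T i j a b) = (\<Sum>a\<in>K. \<Sum>b\<in>L. \<Sum>i\<in>I. \<Sum>j\<in>J. (T i j a b :: 'a::comm_monoid_add))"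
proof -
  have "(\<Sum>i\<in>I. \<Sum>j\<in>J. \<Sum>a\<in>K. \<Sum>b\<in>L. T i j a b) = (\<Sum>i\<in>I. \<Sum>a\<in>K. \<Sum>j\<in>J. \<Sum>b\<in>L. T i j a b)"
    by (rule sum.cong[OF refl], rule sum.swap)
  also have "\<dots> = (\<Sum>i\<in>I. \<Sum>a\<in>K. \<Sum>b\<in>L. \<Sum>j\<in>J. T i j a b)"
    by (rule sum.cong[OF refl], rule sum.cong[OF refl], rule sum.swap)
  also have "\<dots> = (\<Sum>a\<in>K. \<Sum>i\<in>I. \<Sum>b\<in>L. \<Sum>j\<in>J. T i j a b)"
    by (rule sum.swap)
  also have "\<dots> = (\<Sum>a\<in>K. \<Sum>b\<in>L. \<Sum>i\<in>I. \<Sum>j\<in>J. T i j a b)"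
    by (rule sum.cong[OF refl], rule sum.swap)
  finally show ?thesis .
qed

lemma recon:
  fixes u w :: "nat \<Rightarrow> nat \<Rightarrow> complex" and X :: "nat \<Rightarrow> nat \<Rightarrow> complex"
  assumes d: "\<And>p q. p<n \<Longrightarrow> q<n \<Longrightarrow> (\<Sum>i<m. u i p * w i q) = (if p = q then 1 else 0)"
    and p: "p < n" and q: "q < n"
  shows "(\<Sum>i<m. \<Sum>j<m. (\<Sum>a<n. \<Sum>b<n. w i a * X a b * u j b) * (u i p * w j q)) = X p q"
proof -
  have md: "\<And>(x::complex) P. x * ((if P then 1 else 0) * (if Q then 1 else 0)) = (if P then (if Q then x else 0) else 0)" for Q by simp
  have "(\<Sum>i<m. \<Sum>j<m. (\<Sum>a<n. \<Sum>b<n. w i a * X a b * u j b) * (u i p * w j q))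
      = (\<Sum>i<m. \<Sum>j<m. \<Sum>a<n. \<Sum>b<n. X a b * ((u i p * w i a) * (u j b * w j q)))"
    unfolding sum_distrib_right by (intro sum.cong refl) (simp add: mult_ac)
  also have "\<dots> = (\<Sum>a<n. \<Sum>b<n. \<Sum>i<m. \<Sum>j<m. X a b * ((u i p * w i a) * (u j b * w j q)))"
    by (rule swap4)
  also have "\<dots> = (\<Sum>a<n. \<Sum>b<n. X a b * ((\<Sum>i<m. u i p * w i a) * (\<Sum>j<m. u j b * w j q)))"
    unfolding sum_product by (simp only: sum_distrib_left)
  also have "\<dots> = (\<Sum>a<n. \<Sum>b<n. X a b * ((if p = a then 1 else 0) * (if b = q then 1 else 0)))"
    using d q p by (intro sum.cong refl) simp
  also have "\<dots> = (\<Sum>a<n. if a = p then (\<Sum>b<n. if b = q then X a b else 0) else 0)"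
    by (intro sum.cong refl) (simp add: md)
  also have "\<dots> = X p q" using p q by simp
  finally show ?thesis .
qed


lemma block_idx: "p < n \<Longrightarrow> q < n \<Longrightarrow> block n B i j $$ (p,q) = B $$ (i*n+p, j*n+q)"
  by (simp add: block_def)

lemma block_carrier: "block n B i j \<in> carrier_mat n n"
  by (simp add: block_def)

lemma dbs_idx: "p < n \<Longrightarrow> q < n \<Longrightarrow> diag_block_sum n m B $$ (p,q) = (\<Sum>i<m. B $$ (i*n+p, i*n+q))"
  by (simp add: diag_block_sum_def block_def)

theorem mainTheorem9:
  fixes n :: nat and S :: "complex mat set"
  assumes "n \<ge> 1" and "nc_graph n S"
  shows "haemers n S = 1 \<longleftrightarrow> S = carrier_mat n n"
proof -
  note G = assms(2)
  have n0: "0 < n" using assms(1) by simp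
  have Sc: "S \<subseteq> carrier_mat n n" and S1: "1\<^sub>m n \<in> S"
    and Ssm: "\<And>c A. A \<in> S \<Longrightarrow> c \<cdot>\<^sub>m A \<in> S" using G unfolding nc_graph_def by auto
  define P where "P r \<longleftrightarrow> (\<exists>m B. m \<ge> 1 \<and> in_block_space n m S B \<and>
                                 diag_block_sum n m B = 1\<^sub>m n \<and> crank B = r)" for r
  have hdef: "haemers n S = (LEAST r. P r)" by (simp add: haemers_def P_def)
  have ex: "\<exists>r. P r"
  proof -
    have b: "block n (1\<^sub>m n) 0 0 = 1\<^sub>m n" by (intro eq_matI) (auto simp: block_def)
    have "in_block_space n 1 S (1\<^sub>m n)" unfolding in_block_space_def using b S1 by simp
    moreover have "diag_block_sum n 1 (1\<^sub>m n) = 1\<^sub>m n"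
      by (intro eq_matI) (auto simp: diag_block_sum_def block_def)
    ultimately show ?thesis unfolding P_def by blast
  qed
  have ge1: "1 \<le> r" if Pr: "P r" for r
  proof -
    obtain m B where m: "m \<ge> 1" and inb: "in_block_space n m S B"
      and d: "diag_block_sum n m B = 1\<^sub>m n" and rk: "crank B = r"
      using Pr unfolding P_def by blast
    have Bc: "B \<in> carrier_mat (m*n) (m*n)" using inb unfolding in_block_space_def by simp
    have "diag_block_sum n m B $$ (0,0) = 1" using d n0 by simp
    hence "(\<Sum>i<m. B $$ (i*n+0, i*n+0)) = 1" using dbs_idx[OF n0 n0] by simp
    have "\<exists>i<m. B $$ (i*n, i*n) \<noteq> 0"
    proof (rule ccontr)
      assume "\<not> ?thesis"
      hence "(\<Sum>i<m. B $$ (i*n+0, i*n+0)) = 0" by (intro sum.neutral) auto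
      with \<open>(\<Sum>i<m. B $$ (i*n+0, i*n+0)) = 1\<close> show False by simp
    qed
    then obtain i where i: "i < m" and nz: "B $$ (i*n, i*n) \<noteq> 0" by blast
    have il: "i*n < m*n" using idx_lt[OF i n0] by simp
    have "1 \<le> vec_space.rank (m*n) B" by (rule rank_ge1[OF Bc il il nz])
    thus ?thesis using rk Bc unfolding crank_def by simp
  qed
  have key: "haemers n S = 1 \<longleftrightarrow> P 1"
  proof
    assume "haemers n S = 1"
    thus "P 1" using LeastI_ex[OF ex] hdef by simp
  next
    assume "P 1"
    hence "haemers n S \<le> 1" unfolding hdef by (rule Least_le)
    moreover have "1 \<le> haemers n S" unfolding hdef by (rule ge1, rule LeastI_ex[OF ex])
    ultimately show "haemers n S = 1" by simp
  qed
  have "P 1 \<longleftrightarrow> S = carrier_mat n n"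
  proof
    assume "P 1"
    then obtain m B where m: "m \<ge> 1" and inb: "in_block_space n m S B"
      and d: "diag_block_sum n m B = 1\<^sub>m n" and rk: "crank B = 1"
      unfolding P_def by blast
    have Bc: "B \<in> carrier_mat (m*n) (m*n)" using inb unfolding in_block_space_def by simp
    have blS: "\<And>i j. i < m \<Longrightarrow> j < m \<Longrightarrow> block n B i j \<in> S"
      using inb unfolding in_block_space_def by simp
    have "vec_space.rank (m*n) B = 1" using rk Bc unfolding crank_def by simp
    from rank1_factor[OF Bc this] obtain f g where
      fg: "\<And>r c. r < m*n \<Longrightarrow> c < m*n \<Longrightarrow> B $$ (r,c) = f r * g c" by blast
    define u where "u i p = f (i*n+p)" for i p
    define w where "w j q = g (j*n+q)" for j q
    have blk: "block n B i j $$ (p,q) = u i p * w j q" if "i<m" "j<m" "p<n" "q<n" for i j p q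
      using that block_idx fg idx_lt unfolding u_def w_def by simp
    have dg: "(\<Sum>i<m. u i p * w i q) = (if p = q then 1 else 0)" if "p<n" "q<n" for p q
    proof -
      have "(\<Sum>i<m. u i p * w i q) = (\<Sum>i<m. B $$ (i*n+p, i*n+q))"
        using fg idx_lt that unfolding u_def w_def by (intro sum.cong refl) simp
      also have "\<dots> = diag_block_sum n m B $$ (p,q)" using dbs_idx that by simp
      also have "\<dots> = (if p = q then 1 else 0)" using d that by simp
      finally show ?thesis .
    qed
    show "S = carrier_mat n n"
    proof
      show "S \<subseteq> carrier_mat n n" by (rule Sc)
      show "carrier_mat n n \<subseteq> S"
      proof
        fix M :: "complex mat" assume M: "M \<in> carrier_mat n n"
        define c where "c i j = (\<Sum>a<n. \<Sum>b<n. w i a * M $$ (a,b) * u j b)" for i j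
        define F where "F x = c (fst x) (snd x) \<cdot>\<^sub>m block n B (fst x) (snd x)" for x
        have FS: "mat n n (\<lambda>(p,q). \<Sum>x\<in>{..<m}\<times>{..<m}. F x $$ (p,q)) \<in> S"
          by (rule S_sum[OF G]) (auto simp: F_def intro!: Ssm blS)
        have "mat n n (\<lambda>(p,q). \<Sum>x\<in>{..<m}\<times>{..<m}. F x $$ (p,q)) = M"
        proof (rule eq_matI)
          fix p q assume p: "p < dim_row M" and q: "q < dim_col M"
          have pn: "p < n" and qn: "q < n" using p q M by auto
          have "(\<Sum>x\<in>{..<m}\<times>{..<m}. F x $$ (p,q)) = (\<Sum>i<m. \<Sum>j<m. F (i,j) $$ (p,q))"
            by (simp add: sum.cartesian_product)
          also have "\<dots> = (\<Sum>i<m. \<Sum>j<m. c i j * (u i p * w j q))"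
            using pn qn blk by (intro sum.cong refl) (simp add: F_def block_def)
          also have "\<dots> = M $$ (p,q)"
            unfolding c_def by (rule recon[where n=n and m=m and u=u and w=w and X="\<lambda>a b. M $$ (a,b)", OF dg pn qn])
          finally show "mat n n (\<lambda>(p,q). \<Sum>x\<in>{..<m}\<times>{..<m}. F x $$ (p,q)) $$ (p,q) = M $$ (p,q)"
            using pn qn by simp
        qed (use M in auto)
        thus "M \<in> S" using FS by simp
      qed
    qed
  next
    assume SC: "S = carrier_mat n n"
    define h where "h x = (if x div n = x mod n then 1 else 0 :: complex)" for x
    define B where "B = mat (n*n) (n*n) (\<lambda>(x,y). h x * h y)"
    have Bc: "B \<in> carrier_mat (n*n) (n*n)" by (simp add: B_def)
    have inb: "in_block_space n n S B" unfolding in_block_space_def SC using Bc block_carrier by simp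
    have d: "diag_block_sum n n B = 1\<^sub>m n"
    proof (rule eq_matI)
      fix p q assume p: "p < dim_row (1\<^sub>m n)" and q: "q < dim_col (1\<^sub>m n)"
      hence pn: "p < n" and qn: "q < n" by auto
      have "diag_block_sum n n B $$ (p,q) = (\<Sum>i<n. B $$ (i*n+p, i*n+q))" by (rule dbs_idx[OF pn qn])
      also have "\<dots> = (\<Sum>i<n. (if i = p then 1 else 0) * (if i = q then 1 else 0))"
        using idx_lt pn qn n0 by (intro sum.cong refl) (simp add: B_def h_def)
      also have "\<dots> = 1\<^sub>m n $$ (p,q)" using pn qn by (simp add: if_distrib cong: if_cong)
      finally show "diag_block_sum n n B $$ (p,q) = 1\<^sub>m n $$ (p,q)" .
    qed (auto simp: diag_block_sum_def)
    have r1: "vec_space.rank (n*n) B \<le> 1"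
      by (rule vec_space.rank_le_1_product_entries[OF Bc, of h h]) (simp add: B_def)
    have nn: "0 < n*n" using n0 by simp
    have "B $$ (0,0) = 1" using nn n0 by (simp add: B_def h_def)
    hence r2: "1 \<le> vec_space.rank (n*n) B" using rank_ge1[OF Bc nn nn] by simp
    have "crank B = 1" using r1 r2 Bc unfolding crank_def by simp
    thus "P 1" unfolding P_def using inb d assms(1) by blast
  qed
  with key show ?thesis by simp
qed

end
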